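(* Let $s\ge2$ and let $Q^*=\|q_{ik}\|$ ($i\in\{0,\dots,s-1\}$, $k\in\mathbb N$) define a $Q^*$-expansion of $[0,1]$ with $\inf_{i,k}q_{ik}>0$. Then the family $\varPhi$ of (interiors of) $Q^*$-cylinders is faithful for packing dimension calculation: $\dim_P(E,\varPhi)=\dim_{P(\mathit{unc})}(E)$ for every $E\subset[0,1]$.
   Context: A $Q^*$-expansion is a $\tilde Q$-expansion with $N_k=s$ for all $k$: $q_{ik}>0$, $\sum_iq_{ik}=1$, $\prod_k\max_iq_{ik}=0$, and $x=\sum_k\beta_{a_kk}\prod_{j<k}q_{a_jj}$ with $\beta_{ik}=\sum_{l<i}q_{lk}$; the rank-$n$ cylinder $\varDelta_{c_1\dots c_n}=\{x: a_j(x)=c_j,\ j\le n\}$ is an interval of length $\prod_{j\le n}q_{c_jj}$. In $\mathbb R$: an uncentered $\varepsilon$-packing of $E$ is a countable family of pairwise disjoint open intervals of length $\le\varepsilon$ each meeting $E$; $\mathcal P^\alpha_{\varepsilon(\mathit{unc})}(E)=\sup\sum|E_i|^\alpha$, $\mathcal P^\alpha_{0(\mathit{unc})}=\lim_{\varepsilon\to0}$, $\mathcal P^\alpha_{(\mathit{unc})}(E)=\inf\{\sum_j\mathcal P^\alpha_{0(\mathit{unc})}(E_j):E\subset\bigcup E_j\}$, $\dim_{P(\mathit{unc})}(E)=\inf\{\alpha:\mathcal P^\alpha_{(\mathit{unc})}(E)=0\}$; $\dim_P(E,\varPhi)$ is the same using only packings by intervals from $\varPhi$. *)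

theory Defs
  imports "HOL-Analysis.Analysis"
begin

text \<open>The matrix Q* = (q i k), digits i < s, positions k :: nat (0-based).\<close>

definition Qstar_matrix :: "nat \<Rightarrow> (nat \<Rightarrow> nat \<Rightarrow> real) \<Rightarrow> bool" where
  "Qstar_matrix s q \<longleftrightarrow>
     (\<forall>i<s. \<forall>k. q i k > 0) \<and>
     (\<forall>k. (\<Sum>i<s. q i k) = 1) \<and>
     (\<lambda>n. \<Prod>k<n. Max ((\<lambda>i. q i k) ` {..<s})) \<longlonglongrightarrow> 0"

definition qbeta :: "(nat \<Rightarrow> nat \<Rightarrow> real) \<Rightarrow> nat \<Rightarrow> nat \<Rightarrow> real" where
  "qbeta q i k = (\<Sum>l<i. q l k)"

definition cyl_left :: "(nat \<Rightarrow> nat \<Rightarrow> real) \<Rightarrow> nat list \<Rightarrow> real" where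
  "cyl_left q c = (\<Sum>k<length c. qbeta q (c!k) k * (\<Prod>j<k. q (c!j) j))"

definition cyl_len :: "(nat \<Rightarrow> nat \<Rightarrow> real) \<Rightarrow> nat list \<Rightarrow> real" where
  "cyl_len q c = (\<Prod>j<length c. q (c!j) j)"

definition Qstar_cyl_family :: "nat \<Rightarrow> (nat \<Rightarrow> nat \<Rightarrow> real) \<Rightarrow> real set set" where
  "Qstar_cyl_family s q =
     {{cyl_left q c <..< cyl_left q c + cyl_len q c} | c. set c \<subseteq> {..<s}}"

definition packing :: "(real set \<Rightarrow> bool) \<Rightarrow> real \<Rightarrow> real set \<Rightarrow> (real \<times> real) set \<Rightarrow> bool" where
  "packing adm \<epsilon> E P \<longleftrightarrow>
     countable P \<and>
     (\<forall>(a,b)\<in>P. a < b \<and> adm {a<..<b} \<and> b - a \<le> \<epsilon> \<and> {a<..<b} \<inter> E \<noteq> {}) \<and>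
     (\<forall>p\<in>P. \<forall>p'\<in>P. p \<noteq> p' \<longrightarrow> {fst p<..<snd p} \<inter> {fst p'<..<snd p'} = {})"

definition packing_pre_eps :: "(real set \<Rightarrow> bool) \<Rightarrow> real \<Rightarrow> real \<Rightarrow> real set \<Rightarrow> ennreal" where
  "packing_pre_eps adm \<alpha> \<epsilon> E =
     (SUP P \<in> {P. packing adm \<epsilon> E P}. infsum (\<lambda>(a,b). ennreal ((b - a) powr \<alpha>)) P)"

text \<open>The limit as epsilon tends to 0 (the pre-measure is monotone in epsilon, so the limit
  is the infimum over epsilon > 0).\<close>

definition packing_pre :: "(real set \<Rightarrow> bool) \<Rightarrow> real \<Rightarrow> real set \<Rightarrow> ennreal" where
  "packing_pre adm \<alpha> E = (INF \<epsilon> \<in> {0<..}. packing_pre_eps adm \<alpha> \<epsilon> E)"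

definition packing_measure :: "(real set \<Rightarrow> bool) \<Rightarrow> real \<Rightarrow> real set \<Rightarrow> ennreal" where
  "packing_measure adm \<alpha> E =
     (INF C \<in> {C :: nat \<Rightarrow> real set. E \<subseteq> (\<Union>j. C j)}. (\<Sum>j. packing_pre adm \<alpha> (C j)))"

definition packing_dim :: "(real set \<Rightarrow> bool) \<Rightarrow> real set \<Rightarrow> ereal" where
  "packing_dim adm E = Inf {ereal \<alpha> | \<alpha>. \<alpha> \<ge> 0 \<and> packing_measure adm \<alpha> E = 0}"

definition packing_dim_unc :: "real set \<Rightarrow> ereal" where
  "packing_dim_unc E = packing_dim (\<lambda>_. True) E"

definition packing_dim_fam :: "real set \<Rightarrow> real set set \<Rightarrow> ereal" where
  "packing_dim_fam E \<Phi> = packing_dim (\<lambda>I. I \<in> \<Phi>) E"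

end

theory Submission
  imports Defs
begin

lemma cyl_len_snoc: "cyl_len q (c @ [i]) = cyl_len q c * q i (length c)"
  unfolding cyl_len_def by (simp add: nth_append)

lemma cyl_left_snoc: "cyl_left q (c @ [i]) = cyl_left q c + qbeta q i (length c) * cyl_len q c"
proof -
  have "(\<Sum>k<length c. qbeta q ((c@[i])!k) k * (\<Prod>j<k. q ((c@[i])!j) j))
      = (\<Sum>k<length c. qbeta q (c!k) k * (\<Prod>j<k. q (c!j) j))"
    by (intro sum.cong refl) (simp add: nth_append)
  moreover have "(\<Prod>j<length c. q ((c@[i])!j) j) = cyl_len q c"
    unfolding cyl_len_def by (intro prod.cong refl) (simp add: nth_append)
  ultimately show ?thesis unfolding cyl_left_def by simp
qed


lemma indep_exists:
  assumes "finite A" "\<And>v. v \<in> A \<Longrightarrow> R v v" "\<And>v w. R v w \<Longrightarrow> R w v"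
    "\<And>v. v \<in> A \<Longrightarrow> card {w\<in>A. R v w} \<le> d"
  shows "\<exists>B\<subseteq>A. (\<forall>v\<in>B. \<forall>w\<in>B. v \<noteq> w \<longrightarrow> \<not> R v w) \<and> card A \<le> d * card B"
  using assms
proof (induction "card A" arbitrary: A rule: less_induct)
  case less
  show ?case
  proof (cases "A = {}")
    case True then show ?thesis by auto
  next
    case False
    then obtain v where v: "v \<in> A" by auto
    define N where "N = {w\<in>A. R v w}"
    define A' where "A' = A - N"
    have vN: "v \<in> N" using v less.prems(2) by (simp add: N_def)
    have fA': "finite A'" using less.prems(1) by (simp add: A'_def)
    have "card A' < card A" unfolding A'_def using vN v less.prems(1) N_def
      by (intro psubset_card_mono) auto
    moreover have "\<And>w. w \<in> A' \<Longrightarrow> card {u\<in>A'. R w u} \<le> d"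
    proof -
      fix w assume "w \<in> A'"
      then have "card {u\<in>A'. R w u} \<le> card {u\<in>A. R w u}"
        using less.prems(1) by (intro card_mono) (auto simp: A'_def)
      also have "\<dots> \<le> d" using less.prems(4) \<open>w \<in> A'\<close> by (auto simp: A'_def)
      finally show "card {u\<in>A'. R w u} \<le> d" .
    qed
    moreover have "\<And>w. w \<in> A' \<Longrightarrow> R w w" using less.prems(2) by (simp add: A'_def)
    ultimately obtain B' where B': "B' \<subseteq> A'" "\<forall>v\<in>B'. \<forall>w\<in>B'. v \<noteq> w \<longrightarrow> \<not> R v w"
        "card A' \<le> d * card B'"
      using less.hyps[of A', OF _ fA' _ less.prems(3)] by blast
    have fB': "finite B'" using B'(1) fA' finite_subset by blast
    have vB': "v \<notin> B'" using B'(1) vN by (auto simp: A'_def)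
    have cA: "card A = card A' + card N"
    proof -
      have NA: "N \<subseteq> A" by (auto simp: N_def)
      have fN: "finite N" using NA less.prems(1) finite_subset by blast
      have "card A' = card A - card N" unfolding A'_def using card_Diff_subset[OF fN NA] .
      moreover have "card N \<le> card A" using card_mono[OF less.prems(1) NA] .
      ultimately show ?thesis by simp
    qed
    have "card N \<le> d" using less.prems(4)[OF v] by (simp add: N_def)
    then have "card A \<le> d * card (insert v B')" using cA B'(3) fB' vB' by simp
    moreover have "insert v B' \<subseteq> A" using B'(1) v by (auto simp: A'_def)
    moreover have "\<forall>x\<in>insert v B'. \<forall>y\<in>insert v B'. x \<noteq> y \<longrightarrow> \<not> R x y"
      using B' less.prems(3) by (auto simp: A'_def N_def)
    ultimately show ?thesis by blast
  qed
qed

lemma len_sum: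
  fixes P :: "(real \<times> real) set"
  assumes "finite P"
  shows "(\<forall>p\<in>P. fst p < snd p \<and> l \<le> fst p \<and> snd p \<le> u) \<longrightarrow> l \<le> u \<longrightarrow>
    (\<forall>p\<in>P. \<forall>p'\<in>P. p \<noteq> p' \<longrightarrow> {fst p<..<snd p} \<inter> {fst p'<..<snd p'} = {}) \<longrightarrow>
    (\<Sum>p\<in>P. snd p - fst p) \<le> u - l"
  using assms
proof (induction P arbitrary: u rule: finite_ranking_induct[where f=fst])
  case empty then show ?case by simp
next
  case (insert x S)
  show ?case
  proof (cases "x \<in> S")
    case True then show ?thesis using insert by (simp add: insert_absorb)
  next
    case False
    show ?thesis
    proof (intro impI)
      assume b: "\<forall>p\<in>insert x S. fst p < snd p \<and> l \<le> fst p \<and> snd p \<le> u" and "l \<le> u"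
        and d: "\<forall>p\<in>insert x S. \<forall>p'\<in>insert x S. p \<noteq> p' \<longrightarrow> {fst p<..<snd p} \<inter> {fst p'<..<snd p'} = {}"
      have sy: "snd y \<le> fst x" if y: "y \<in> S" for y
      proof (rule ccontr)
        assume "\<not> snd y \<le> fst x"
        define t where "t = (fst x + min (snd x) (snd y)) / 2"
        have "y \<noteq> x" using y False by auto
        moreover have "fst y \<le> fst x" using insert(2)[OF y] .
        moreover have "fst x < snd x" using b by auto
        ultimately have "t \<in> {fst y<..<snd y} \<inter> {fst x<..<snd x}"
          using \<open>\<not> snd y \<le> fst x\<close> unfolding t_def by auto
        then show False using d y \<open>y \<noteq> x\<close> by blast
      qed
      have lx: "l \<le> fst x" using b by auto
      have "(\<Sum>p\<in>S. snd p - fst p) \<le> fst x - l"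
        using insert(3)[of "fst x"] b d sy lx by auto
      then show "(\<Sum>p\<in>insert x S. snd p - fst p) \<le> u - l"
        using False insert(1) b by simp
    qed
  qed
qed


lemma half_pow_powr: "((1/2::real)^m) powr x = (2 powr (-x))^m"
proof -
  have "(2::real) powr (- real m) = inverse (2 powr real m)" by (rule powr_minus)
  also have "\<dots> = inverse (2^m)" by (subst powr_realpow) auto
  also have "\<dots> = (1/2::real)^m" by (simp add: power_one_over inverse_eq_divide)
  finally have "(1/2::real)^m = 2 powr (- real m)" by simp
  then have "((1/2::real)^m) powr x = 2 powr (- real m * x)" by (simp add: powr_powr)
  also have "\<dots> = (2 powr (-x))^m" by (simp add: powr_power)
  finally show ?thesis .
qed

lemma scale_ex:
  fixes t :: real assumes "0 < t" "t \<le> 1"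
  shows "\<exists>m. (1/2)^(Suc m) < t \<and> t \<le> (1/2)^m"
proof -
  define P where "P m \<longleftrightarrow> (1/2::real)^(Suc m) < t" for m
  obtain n where "(1/2::real)^n < t" using real_arch_pow_inv[OF assms(1), of "1/2"] by auto
  moreover have "(1/2::real)^(Suc n) < (1/2)^n" by simp
  ultimately have "P n" unfolding P_def by linarith
  define m where "m = (LEAST m. P m)"
  have Pm: "P m" unfolding m_def by (rule LeastI[of P, OF \<open>P n\<close>])
  have "t \<le> (1/2)^m"
  proof (cases m)
    case 0 then show ?thesis using assms by simp
  next
    case (Suc k)
    then have "\<not> P k" unfolding m_def by (metis lessI not_less_Least)
    then show ?thesis using Suc unfolding P_def by simp
  qed
  then show ?thesis using Pm unfolding P_def by blast
qed

lemma geom_bound: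
  fixes r :: real assumes "0 \<le> r" "r < 1" "finite I"
  shows "(\<Sum>m\<in>I. r^m) \<le> 1 / (1 - r)"
proof -
  have "(\<Sum>m\<in>I. r^m) \<le> (\<Sum>m. r^m)"
    using assms by (intro sum_le_suminf summable_geometric) auto
  also have "\<dots> = 1/(1-r)" using assms by (intro suminf_geometric) auto
  finally show ?thesis .
qed

locale qs =
  fixes s :: nat and q :: "nat \<Rightarrow> nat \<Rightarrow> real" and \<delta> :: real
  assumes s2: "s \<ge> 2" and Q: "Qstar_matrix s q" and dpos: "\<delta> > 0"
    and qd: "\<And>i k. i < s \<Longrightarrow> q i k \<ge> \<delta>"
begin

lemma qpos: "i < s \<Longrightarrow> q i k > 0" using Q unfolding Qstar_matrix_def by auto
lemma qsum: "(\<Sum>i<s. q i k) = 1" using Q unfolding Qstar_matrix_def by auto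

lemma qbeta_nonneg: "i \<le> s \<Longrightarrow> qbeta q i k \<ge> 0"
  unfolding qbeta_def by (intro sum_nonneg) (meson less_imp_le qpos order_less_le_trans lessThan_iff)

lemma qbeta_Suc: "qbeta q (Suc i) k = qbeta q i k + q i k"
  unfolding qbeta_def by simp

lemma qbeta_s: "qbeta q s k = 1" unfolding qbeta_def using qsum by simp

lemma qbeta_mono: "i \<le> j \<Longrightarrow> j \<le> s \<Longrightarrow> qbeta q i k \<le> qbeta q j k"
  unfolding qbeta_def by (intro sum_mono2) (auto, meson less_imp_le qpos order_less_le_trans)

lemma q_le: assumes "i < s" shows "q i k \<le> 1 - \<delta>"
proof -
  define j where "j = (if i = 0 then 1 else 0::nat)"
  have j: "j < s" "j \<noteq> i" using s2 assms by (auto simp: j_def)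
  have "q i k + q j k = (\<Sum>l\<in>{i,j}. q l k)" using j by simp
  also have "\<dots> \<le> (\<Sum>l<s. q l k)" using j assms
    by (intro sum_mono2) (auto, meson less_imp_le qpos)
  finally show ?thesis using qsum[of k] qd[OF j(1), of k] by simp
qed

lemma dle1: "\<delta> \<le> 1" using qd[of 0 0] q_le[of 0 0] s2 by auto

definition valid :: "nat list \<Rightarrow> bool" where "valid c \<longleftrightarrow> set c \<subseteq> {..<s}"

lemma len_pos: "valid c \<Longrightarrow> cyl_len q c > 0"
  unfolding cyl_len_def valid_def by (intro prod_pos) (meson lessThan_iff nth_mem qpos subsetD)

lemma len_le: "valid c \<Longrightarrow> cyl_len q c \<le> (1 - \<delta>) ^ length c"
proof (induction c rule: rev_induct)
  case Nil then show ?case by (simp add: cyl_len_def)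
next
  case (snoc i c)
  then have v: "valid c" "i < s" by (auto simp: valid_def)
  have "cyl_len q (c@[i]) = cyl_len q c * q i (length c)" by (rule cyl_len_snoc)
  also have "\<dots> \<le> (1-\<delta>)^length c * (1 - \<delta>)"
    using snoc.IH[OF v(1)] q_le[OF v(2)] len_pos[OF v(1)] less_imp_le[OF qpos[OF v(2)]]
    by (intro mult_mono) auto
  finally show ?case by (simp add: mult.commute)
qed

lemma snoc_sub: assumes "valid c" "i < s"
  shows "cyl_left q c \<le> cyl_left q (c@[i])"
    "cyl_left q (c@[i]) + cyl_len q (c@[i]) \<le> cyl_left q c + cyl_len q c"
proof -
  have L: "cyl_len q c > 0" using len_pos assms by auto
  have "qbeta q i (length c) \<ge> 0" using qbeta_nonneg assms by auto
  then show "cyl_left q c \<le> cyl_left q (c@[i])" using L by (simp add: cyl_left_snoc)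
  have "qbeta q (Suc i) (length c) \<le> 1" using qbeta_mono[of "Suc i" s] qbeta_s assms by auto
  then have "(qbeta q i (length c) + q i (length c)) * cyl_len q c \<le> cyl_len q c"
    using L by (simp add: qbeta_Suc)
  then show "cyl_left q (c@[i]) + cyl_len q (c@[i]) \<le> cyl_left q c + cyl_len q c"
    by (simp add: cyl_left_snoc cyl_len_snoc algebra_simps)
qed

definition D :: "real set" where
  "D = {cyl_left q c | c. valid c} \<union> {cyl_left q c + cyl_len q c | c. valid c}"

lemma countable_D: "countable D"
proof -
  have "D \<subseteq> (\<lambda>c. cyl_left q c) ` UNIV \<union> (\<lambda>c. cyl_left q c + cyl_len q c) ` UNIV"
    unfolding D_def by auto
  then show ?thesis by (rule countable_subset) auto
qed

lemma D01: "0 \<in> D" "1 \<in> D"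
  unfolding D_def valid_def by (auto intro!: exI[of _ "[]"] simp: cyl_left_def cyl_len_def)

lemma exists_cyl:
  assumes x: "0 \<le> x" "x \<le> 1" "x \<notin> D"
  shows "\<exists>c. length c = n \<and> valid c \<and> cyl_left q c < x \<and> x < cyl_left q c + cyl_len q c"
proof (induction n)
  case 0
  have "x \<noteq> 0" "x \<noteq> 1" using x D01 by auto
  then show ?case using x by (auto intro!: exI[of _ "[]"] simp: cyl_left_def cyl_len_def valid_def)
next
  case (Suc n)
  then obtain c where c: "length c = n" "valid c" "cyl_left q c < x" "x < cyl_left q c + cyl_len q c"
    by blast
  define L where "L = cyl_len q c"
  have L: "L > 0" using len_pos c by (simp add: L_def)
  define I where "I = {i. i < s \<and> cyl_left q c + qbeta q i n * L < x}"
  have "0 \<in> I" using c s2 by (simp add: I_def qbeta_def)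
  have fI: "finite I" unfolding I_def by auto
  define i where "i = Max I"
  have iI: "i \<in> I" using fI \<open>0 \<in> I\<close> unfolding i_def by (intro Max_in) auto
  then have iS: "i < s" and lt: "cyl_left q c + qbeta q i n * L < x" by (auto simp: I_def)
  have vi: "valid (c@[i])" using c iS by (auto simp: valid_def)
  have eqr: "cyl_left q (c@[i]) + cyl_len q (c@[i]) = cyl_left q c + qbeta q (Suc i) n * L"
    by (simp add: cyl_left_snoc cyl_len_snoc qbeta_Suc c(1) L_def algebra_simps)
  have eql: "cyl_left q (c@[i]) = cyl_left q c + qbeta q i n * L"
    by (simp add: cyl_left_snoc c(1) L_def)
  have "x < cyl_left q c + qbeta q (Suc i) n * L"
  proof (cases "Suc i < s")
    case True
    then have "Suc i \<notin> I" using Max_ge[OF fI, of "Suc i"] unfolding i_def by auto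
    then have le: "x \<le> cyl_left q c + qbeta q (Suc i) n * L" using True by (auto simp: I_def)
    have "x \<noteq> cyl_left q (c@[i]) + cyl_len q (c@[i])" using x(3) vi unfolding D_def by blast
    then show ?thesis using le eqr by simp
  next
    case False
    then have "Suc i = s" using iS by simp
    then show ?thesis using c qbeta_s by (simp add: L_def)
  qed
  then have "cyl_left q (c@[i]) < x" "x < cyl_left q (c@[i]) + cyl_len q (c@[i])"
    using lt eql eqr by simp_all
  then show ?case using vi c(1) by (intro exI[of _ "c@[i]"]) simp
qed

lemma good_cyl:
  assumes x: "0 \<le> x" "x \<le> 1" "x \<notin> D" and h: "0 < h" "h \<le> 1"
  shows "\<exists>c. valid c \<and> cyl_left q c < x \<and> x < cyl_left q c + cyl_len q c
            \<and> \<delta> * h \<le> cyl_len q c \<and> cyl_len q c \<le> h"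
proof -
  define P where "P n \<longleftrightarrow> (\<exists>c. length c = n \<and> valid c \<and> cyl_left q c < x
        \<and> x < cyl_left q c + cyl_len q c \<and> cyl_len q c \<le> h)" for n
  obtain n0 where n0: "(1 - \<delta>)^n0 < h" using real_arch_pow_inv[OF h(1), of "1-\<delta>"] dpos by auto
  obtain c0 where c0: "length c0 = n0" "valid c0" "cyl_left q c0 < x" "x < cyl_left q c0 + cyl_len q c0"
    using exists_cyl[OF x] by blast
  have "P n0" unfolding P_def using c0 len_le[OF c0(2)] n0 by (intro exI[of _ c0]) auto
  define n where "n = (LEAST n. P n)"
  have Pn: "P n" unfolding n_def by (rule LeastI[of P, OF \<open>P n0\<close>])
  then obtain c where c: "length c = n" "valid c" "cyl_left q c < x"
     "x < cyl_left q c + cyl_len q c" "cyl_len q c \<le> h" unfolding P_def by blast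
  show ?thesis
  proof (cases n)
    case 0
    then have "cyl_len q c = 1" using c by (simp add: cyl_len_def)
    moreover have "\<delta> * h \<le> 1" using dle1 h dpos by (simp add: mult_le_one)
    ultimately show ?thesis using c by (intro exI[of _ c]) simp
  next
    case (Suc m)
    then have ne: "c \<noteq> []" using c by auto
    define c' where "c' = butlast c"
    define i where "i = last c"
    have ceq: "c = c' @ [i]" using ne by (simp add: c'_def i_def)
    have v': "valid c'" and iS: "i < s" using c(2) unfolding ceq valid_def by auto
    have lc': "length c' = m" using c(1) Suc by (simp add: c'_def)
    have "\<not> P m" using Suc unfolding n_def by (metis lessI not_less_Least)
    moreover have "cyl_left q c' < x" "x < cyl_left q c' + cyl_len q c'"
      using snoc_sub[OF v' iS] c(3,4) unfolding ceq by linarith+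
    ultimately have "cyl_len q c' > h" unfolding P_def using lc' v' by force
    then have "\<delta> * h \<le> q i m * cyl_len q c'"
      using qd[OF iS, of m] dpos h by (intro mult_mono) auto
    also have "\<dots> = cyl_len q c" unfolding ceq by (simp add: cyl_len_snoc lc')
    finally show ?thesis using c by (intro exI[of _ c]) simp
  qed
qed

definition Kc :: "real \<Rightarrow> real \<Rightarrow> real" where
  "Kc \<alpha> \<beta> = 12 * (2/\<delta>) powr \<alpha> / (1 - 2 powr (\<alpha> - \<beta>))"

lemma core_finite:
  assumes F: "F \<subseteq> {0..1}" "F \<inter> D = {}" and eps: "0 < \<epsilon>" "\<epsilon> \<le> 1" and ab: "0 \<le> \<alpha>" "\<alpha> < \<beta>"
    and P: "finite P" "packing (\<lambda>_. True) \<epsilon> F P"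
    and S: "\<And>Q. finite Q \<Longrightarrow> packing (\<lambda>I. I \<in> Qstar_cyl_family s q) \<epsilon> F Q \<Longrightarrow>
              (\<Sum>p\<in>Q. (snd p - fst p) powr \<alpha>) \<le> S"
  shows "(\<Sum>p\<in>P. (snd p - fst p) powr \<beta>) \<le> Kc \<alpha> \<beta> * S"
proof -
  have S0: "0 \<le> S" using S[of "{}"] unfolding packing_def by simp
  have Pp: "fst p < snd p \<and> snd p - fst p \<le> \<epsilon> \<and> {fst p<..<snd p} \<inter> F \<noteq> {}" if "p \<in> P" for p
    using P(2) that unfolding packing_def by (cases p) fastforce
  have Pd: "{fst p<..<snd p} \<inter> {fst p'<..<snd p'} = {}" if "p\<in>P" "p'\<in>P" "p \<noteq> p'" for p p'
    using P(2) that unfolding packing_def by blast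
  define t where "t p = snd p - fst p" for p :: "real \<times> real"
  have ex: "\<forall>p\<in>P. \<exists>x. \<exists>c. (fst p < x \<and> x < snd p \<and> x \<in> F) \<and> (valid c \<and> cyl_left q c < x \<and>
      x < cyl_left q c + cyl_len q c \<and> \<delta> * t p \<le> cyl_len q c \<and> cyl_len q c \<le> t p)"
  proof
    fix p assume p: "p \<in> P"
    obtain x where x: "fst p < x" "x < snd p" "x \<in> F" using Pp[OF p] by auto
    have x01: "0 \<le> x" "x \<le> 1" "x \<notin> D" using x F by auto
    have "0 < t p" "t p \<le> 1" using Pp[OF p] eps by (auto simp: t_def)
    from good_cyl[OF x01 this] obtain c where "valid c \<and> cyl_left q c < x \<and>
      x < cyl_left q c + cyl_len q c \<and> \<delta> * t p \<le> cyl_len q c \<and> cyl_len q c \<le> t p" by blast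
    then show "\<exists>x c. (fst p < x \<and> x < snd p \<and> x \<in> F) \<and> (valid c \<and> cyl_left q c < x \<and>
      x < cyl_left q c + cyl_len q c \<and> \<delta> * t p \<le> cyl_len q c \<and> cyl_len q c \<le> t p)"
      using x by blast
  qed
  obtain X where X: "\<forall>p\<in>P. \<exists>c. (fst p < X p \<and> X p < snd p \<and> X p \<in> F) \<and> (valid c \<and> cyl_left q c < X p \<and>
      X p < cyl_left q c + cyl_len q c \<and> \<delta> * t p \<le> cyl_len q c \<and> cyl_len q c \<le> t p)"
    using bchoice[OF ex] by blast
  obtain C where XC: "\<forall>p\<in>P. (fst p < X p \<and> X p < snd p \<and> X p \<in> F) \<and> (valid (C p) \<and> cyl_left q (C p) < X p \<and>
      X p < cyl_left q (C p) + cyl_len q (C p) \<and> \<delta> * t p \<le> cyl_len q (C p) \<and> cyl_len q (C p) \<le> t p)"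
    using bchoice[OF X] by blast
  define lf where "lf p = cyl_left q (C p)" for p
  define ln where "ln p = cyl_len q (C p)" for p
  define J where "J p = {lf p <..< lf p + ln p}" for p
  have XJ: "X p \<in> J p" if "p \<in> P" for p using XC that by (auto simp: J_def lf_def ln_def)
  have scale: "\<forall>p\<in>P. \<exists>m. (1/2::real)^(Suc m) < t p \<and> t p \<le> (1/2)^m"
  proof
    fix p assume "p \<in> P"
    then have "0 < t p" "t p \<le> 1" using Pp[OF \<open>p \<in> P\<close>] eps by (auto simp: t_def)
    then show "\<exists>m. (1/2::real)^(Suc m) < t p \<and> t p \<le> (1/2)^m" by (rule scale_ex)
  qed
  obtain M where M: "\<forall>p\<in>P. (1/2::real)^(Suc (M p)) < t p \<and> t p \<le> (1/2)^(M p)"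
    using bchoice[OF scale] by blast
  define r where "r = (2::real) powr (\<alpha> - \<beta>)"
  have bound_m: "(\<Sum>p\<in>{p\<in>P. M p = m}. t p powr \<beta>) \<le> 12 * S * (2/\<delta>) powr \<alpha> * r^m" for m
  proof -
    define Pm where "Pm = {p\<in>P. M p = m}"
    define h where "h = (1/2::real)^m"
    have h0: "h > 0" by (simp add: h_def)
    have tPm: "h/2 < t p \<and> t p \<le> h" if "p \<in> Pm" for p
      using M that by (auto simp: Pm_def h_def)
    define R where "R p p' \<longleftrightarrow> J p \<inter> J p' \<noteq> {}" for p p'
    have fPm: "finite Pm" using P(1) by (simp add: Pm_def)
    have PmP: "Pm \<subseteq> P" by (auto simp: Pm_def)
    have deg: "card {p'\<in>Pm. R p p'} \<le> 12" if p: "p \<in> Pm" for p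
    proof -
      define A where "A = {p'\<in>Pm. R p p'}"
      have fA: "finite A" using fPm by (simp add: A_def)
      have AP: "A \<subseteq> P" using PmP by (auto simp: A_def)
      have inside: "X p - 3*h \<le> fst p' \<and> snd p' \<le> X p + 3*h" if p': "p' \<in> A" for p'
      proof -
        obtain y where y: "y \<in> J p" "y \<in> J p'" using p' by (auto simp: A_def R_def)
        have p'P: "p' \<in> P" "p \<in> P" "p' \<in> Pm" using p' p PmP by (auto simp: A_def)
        have c1: "lf p < X p" "X p < lf p + ln p" "ln p \<le> t p"
          using XC p'P(2) by (auto simp: lf_def ln_def)
        have c2: "lf p' < X p'" "X p' < lf p' + ln p'" "ln p' \<le> t p'" "fst p' < X p'" "X p' < snd p'"
          using XC p'P(1) by (auto simp: lf_def ln_def)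
        have "t p \<le> h" "t p' \<le> h" using tPm p p'P(3) by auto
        then show ?thesis using c1 c2 y unfolding J_def t_def by auto
      qed
      have i1: "\<forall>z\<in>A. fst z < snd z \<and> X p - 3*h \<le> fst z \<and> snd z \<le> X p + 3*h"
        using inside Pp AP by blast
      have i2: "X p - 3*h \<le> X p + 3*h" using h0 by simp
      have i3: "\<forall>z\<in>A. \<forall>z'\<in>A. z \<noteq> z' \<longrightarrow> {fst z<..<snd z} \<inter> {fst z'<..<snd z'} = {}"
        using Pd AP by blast
      have "(\<Sum>p'\<in>A. snd p' - fst p') \<le> (X p + 3*h) - (X p - 3*h)"
        using len_sum[OF fA, of "X p - 3*h" "X p + 3*h"] i1 i2 i3 by blast
      moreover have "(\<Sum>p'\<in>A. h/2) \<le> (\<Sum>p'\<in>A. snd p' - fst p')"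
        using tPm by (intro sum_mono) (auto simp: A_def t_def less_imp_le)
      ultimately have "real (card A) * (h/2) \<le> 6*h" by simp
      then have "real (card A) \<le> 12" using h0 by (simp add: field_simps)
      then show ?thesis unfolding A_def by simp
    qed
    have Rrefl: "R p p" if "p \<in> Pm" for p using XJ[of p] that PmP by (auto simp: R_def)
    have Rsym: "R p p' \<Longrightarrow> R p' p" for p p' by (auto simp: R_def)
    obtain B where B: "B \<subseteq> Pm" "\<forall>v\<in>B. \<forall>w\<in>B. v \<noteq> w \<longrightarrow> \<not> R v w" "card Pm \<le> 12 * card B"
      using indep_exists[OF fPm, of R 12] Rrefl Rsym deg by blast
    have fB: "finite B" using B(1) fPm finite_subset by blast
    have BP: "B \<subseteq> P" using B(1) PmP by blast
    define g where "g p = (lf p, lf p + ln p)" for p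
    define Q where "Q = g ` B"
    have inj: "inj_on g B"
    proof (rule inj_onI)
      fix p p' assume pp: "p \<in> B" "p' \<in> B" "g p = g p'"
      then have "lf p = lf p'" "ln p = ln p'" by (auto simp: g_def)
      then have "J p = J p'" by (simp add: J_def)
      then have "R p p'" using XJ[of p] pp BP by (auto simp: R_def)
      then show "p = p'" using B(2) pp by blast
    qed
    have packQ: "packing (\<lambda>I. I \<in> Qstar_cyl_family s q) \<epsilon> F Q"
      unfolding packing_def
    proof (intro conjI)
      show "countable Q" using fB by (simp add: Q_def countable_finite)
      show "\<forall>(a, b)\<in>Q. a < b \<and> {a<..<b} \<in> Qstar_cyl_family s q \<and> b - a \<le> \<epsilon> \<and> {a<..<b} \<inter> F \<noteq> {}"
      proof
        fix z assume "z \<in> Q"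
        then obtain p where p: "p \<in> B" "z = g p" by (auto simp: Q_def)
        have pP: "p \<in> P" using p BP by auto
        have v: "valid (C p)" and lp: "ln p \<le> t p" using XC pP by (auto simp: ln_def)
        have "0 < ln p" using len_pos[OF v] by (simp add: ln_def)
        moreover have "{lf p<..<lf p + ln p} \<in> Qstar_cyl_family s q"
          using v unfolding Qstar_cyl_family_def valid_def lf_def ln_def by blast
        moreover have "ln p \<le> \<epsilon>" using lp Pp[OF pP] by (simp add: t_def)
        moreover have "X p \<in> {lf p<..<lf p + ln p} \<inter> F" using XJ[OF pP] XC pP by (auto simp: J_def)
        ultimately show "case z of (a, b) \<Rightarrow> a < b \<and> {a<..<b} \<in> Qstar_cyl_family s q \<and> b - a \<le> \<epsilon> \<and> {a<..<b} \<inter> F \<noteq> {}"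
          using p by (auto simp: g_def)
      qed
      show "\<forall>p\<in>Q. \<forall>p'\<in>Q. p \<noteq> p' \<longrightarrow> {fst p<..<snd p} \<inter> {fst p'<..<snd p'} = {}"
      proof (intro ballI impI)
        fix z z' assume z: "z \<in> Q" "z' \<in> Q" "z \<noteq> z'"
        then obtain p p' where pp: "p \<in> B" "p' \<in> B" "z = g p" "z' = g p'" by (auto simp: Q_def)
        then have "p \<noteq> p'" using z by auto
        then have "\<not> R p p'" using B(2) pp by blast
        then show "{fst z<..<snd z} \<inter> {fst z'<..<snd z'} = {}" using pp by (simp add: R_def J_def g_def)
      qed
    qed
    define w where "w = (\<delta> * (h/2)) powr \<alpha>"
    have "(\<Sum>p\<in>B. w) \<le> (\<Sum>p\<in>B. ln p powr \<alpha>)"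
    proof (intro sum_mono)
      fix p assume p: "p \<in> B"
      have pP: "p \<in> P" using p BP by auto
      have "\<delta> * (h/2) \<le> \<delta> * t p" using tPm[of p] p B(1) dpos by auto
      also have "\<dots> \<le> ln p" using XC pP by (auto simp: ln_def)
      finally show "w \<le> ln p powr \<alpha>" unfolding w_def using ab dpos h0 by (intro powr_mono2) auto
    qed
    also have "\<dots> = (\<Sum>z\<in>Q. (snd z - fst z) powr \<alpha>)"
      unfolding Q_def by (subst sum.reindex[OF inj]) (simp add: g_def)
    also have "\<dots> \<le> S" using S[OF _ packQ] fB by (simp add: Q_def)
    finally have BS: "real (card B) * w \<le> S" by simp
    have "(\<Sum>p\<in>Pm. t p powr \<beta>) \<le> real (card Pm) * h powr \<beta>"
    proof (rule sum_bounded_above)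
      fix p assume "p \<in> Pm"
      then show "t p powr \<beta> \<le> h powr \<beta>" using tPm[of p] ab by (intro powr_mono2) auto
    qed
    also have "\<dots> \<le> real (12 * card B) * h powr \<beta>"
      using B(3) by (intro mult_right_mono) auto
    also have "h powr \<beta> = w * ((2/\<delta>) powr \<alpha> * r^m)"
    proof -
      have "h powr (\<beta> - \<alpha>) = r^m" unfolding h_def r_def by (simp add: half_pow_powr)
      have "h powr \<beta> = h powr \<alpha> * h powr (\<beta> - \<alpha>)" using h0 by (simp add: powr_diff)
      moreover have "w * (2/\<delta>) powr \<alpha> = h powr \<alpha>"
      proof -
        have "(\<delta> * (h/2) * (2/\<delta>)) powr \<alpha> = (\<delta> * (h/2)) powr \<alpha> * (2/\<delta>) powr \<alpha>"
          by (rule powr_mult)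
        then have "w * (2/\<delta>) powr \<alpha> = (\<delta> * (h/2) * (2/\<delta>)) powr \<alpha>" unfolding w_def by simp
        also have "\<delta> * (h/2) * (2/\<delta>) = h" using dpos by (simp add: field_simps)
        finally show ?thesis .
      qed
      ultimately show ?thesis using \<open>h powr (\<beta> - \<alpha>) = r^m\<close> by (simp add: mult.assoc)
    qed
    also have "real (12 * card B) * (w * ((2/\<delta>) powr \<alpha> * r^m)) = 12 * (real (card B) * w) * ((2/\<delta>) powr \<alpha> * r^m)"
      by simp
    also have "\<dots> \<le> 12 * S * ((2/\<delta>) powr \<alpha> * r^m)"
      using BS by (intro mult_right_mono) (auto simp: r_def)
    finally show ?thesis by (simp add: Pm_def mult.assoc)
  qed
  have r: "0 \<le> r" "r < 1" using ab unfolding r_def by (auto intro!: powr_less_one)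
  have "(\<Sum>p\<in>P. (snd p - fst p) powr \<beta>) = (\<Sum>m\<in>M ` P. \<Sum>p\<in>{p\<in>P. M p = m}. t p powr \<beta>)"
    using P(1) by (subst sum.group[symmetric, of P "M ` P" M]) (auto simp: t_def)
  also have "\<dots> \<le> (\<Sum>m\<in>M ` P. 12 * S * (2/\<delta>) powr \<alpha> * r^m)"
    by (intro sum_mono bound_m)
  also have "\<dots> = 12 * S * (2/\<delta>) powr \<alpha> * (\<Sum>m\<in>M ` P. r^m)" by (simp add: sum_distrib_left)
  also have "\<dots> \<le> 12 * S * (2/\<delta>) powr \<alpha> * (1 / (1 - r))"
    using S0 P(1) r by (intro mult_left_mono geom_bound) auto
  also have "\<dots> = Kc \<alpha> \<beta> * S" unfolding Kc_def r_def by simp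
  finally show ?thesis .
qed

end

lemma packing_gen_mono:
  assumes "packing adm \<epsilon> A P" "\<And>I. adm I \<Longrightarrow> adm' I" "\<epsilon> \<le> \<epsilon>'" "A \<subseteq> A'" "P' \<subseteq> P"
  shows "packing adm' \<epsilon>' A' P'"
proof -
  have "countable P'" using assms(1,5) countable_subset unfolding packing_def by blast
  moreover have "\<forall>(a,b)\<in>P'. a < b \<and> adm' {a<..<b} \<and> b - a \<le> \<epsilon>' \<and> {a<..<b} \<inter> A' \<noteq> {}"
  proof
    fix z assume "z \<in> P'"
    then have "z \<in> P" using assms(5) by auto
    then have "fst z < snd z \<and> adm {fst z<..<snd z} \<and> snd z - fst z \<le> \<epsilon> \<and> {fst z<..<snd z} \<inter> A \<noteq> {}"
      using assms(1) unfolding packing_def by (cases z) fastforce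
    then show "case z of (a, b) \<Rightarrow> a < b \<and> adm' {a<..<b} \<and> b - a \<le> \<epsilon>' \<and> {a<..<b} \<inter> A' \<noteq> {}"
      using assms(2,3,4) by (cases z) auto
  qed
  moreover have "\<forall>p\<in>P'. \<forall>p'\<in>P'. p \<noteq> p' \<longrightarrow> {fst p<..<snd p} \<inter> {fst p'<..<snd p'} = {}"
    using assms(1,5) unfolding packing_def by blast
  ultimately show ?thesis unfolding packing_def by blast
qed

lemma pre_eps_gen_mono:
  assumes "\<And>I. adm I \<Longrightarrow> adm' I" "\<epsilon> \<le> \<epsilon>'" "A \<subseteq> A'"
  shows "packing_pre_eps adm \<alpha> \<epsilon> A \<le> packing_pre_eps adm' \<alpha> \<epsilon>' A'"
proof -
  have "{P. packing adm \<epsilon> A P} \<subseteq> {P. packing adm' \<epsilon>' A' P}"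
  proof
    fix P assume "P \<in> {P. packing adm \<epsilon> A P}"
    then have "packing adm \<epsilon> A P" by simp
    from packing_gen_mono[OF this assms subset_refl] show "P \<in> {P. packing adm' \<epsilon>' A' P}" by simp
  qed
  then show ?thesis unfolding packing_pre_eps_def by (rule SUP_subset_mono) simp
qed

lemma pre_gen_mono:
  assumes "\<And>I. adm I \<Longrightarrow> adm' I" "A \<subseteq> A'"
  shows "packing_pre adm \<alpha> A \<le> packing_pre adm' \<alpha> A'"
  unfolding packing_pre_def
proof (rule INF_mono)
  fix e assume "e \<in> {0::real<..}"
  then show "\<exists>e'\<in>{0<..}. packing_pre_eps adm \<alpha> e' A \<le> packing_pre_eps adm' \<alpha> e A'"
  proof (intro bexI)
    show "packing_pre_eps adm \<alpha> e A \<le> packing_pre_eps adm' \<alpha> e A'"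
      by (rule pre_eps_gen_mono[OF assms(1) order_refl assms(2)])
  qed assumption
qed

lemma measure_adm_mono:
  assumes "\<And>I. adm I \<Longrightarrow> adm' I"
  shows "packing_measure adm \<alpha> E \<le> packing_measure adm' \<alpha> E"
  unfolding packing_measure_def
proof (rule INF_mono)
  fix C assume C: "C \<in> {C :: nat \<Rightarrow> real set. E \<subseteq> (\<Union>j. C j)}"
  have "(\<Sum>j. packing_pre adm \<alpha> (C j)) \<le> (\<Sum>j. packing_pre adm' \<alpha> (C j))"
    by (intro suminf_le summableI pre_gen_mono[OF assms order_refl])
  with C show "\<exists>C'\<in>{C :: nat \<Rightarrow> real set. E \<subseteq> (\<Union>j. C j)}.
     (\<Sum>j. packing_pre adm \<alpha> (C' j)) \<le> (\<Sum>j. packing_pre adm' \<alpha> (C j))" by (intro bexI)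
qed

lemma infsum_finite_sup:
  "infsum (\<lambda>(a,b). ennreal ((b - a) powr \<alpha>)) P
     = (SUP G\<in>{G. finite G \<and> G \<subseteq> P}. ennreal (\<Sum>p\<in>G. (snd p - fst p) powr \<alpha>))"
proof -
  have "infsum (\<lambda>(a,b). ennreal ((b - a) powr \<alpha>)) P
     = (SUP G\<in>{G. finite G \<and> G \<subseteq> P}. sum (\<lambda>(a,b). ennreal ((b - a) powr \<alpha>)) G)"
    by (rule nonneg_infsum_complete) auto
  also have "\<dots> = (SUP G\<in>{G. finite G \<and> G \<subseteq> P}. ennreal (\<Sum>p\<in>G. (snd p - fst p) powr \<alpha>))"
    by (intro SUP_cong refl) (simp add: sum_ennreal case_prod_unfold)
  finally show ?thesis .
qed

lemma ennreal_le_Ka: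
  fixes a b :: ennreal and k :: real
  assumes k: "k > 0" and H: "\<And>y. a < y \<Longrightarrow> b \<le> ennreal k * y"
  shows "b \<le> ennreal k * a"
proof (cases a)
  case (real r)
  show ?thesis
  proof (rule ennreal_le_epsilon)
    fix e :: real assume e: "0 < e"
    have "a < ennreal (r + e/k)" using real e k by (simp add: ennreal_less_iff)
    then have "b \<le> ennreal k * ennreal (r + e/k)" by (rule H)
    also have "\<dots> = ennreal (k * (r + e/k))" using k real e by (intro ennreal_mult[symmetric]) auto
    also have "k * (r + e/k) = k * r + e" using k by (simp add: field_simps)
    also have "ennreal (k * r + e) = ennreal (k * r) + ennreal e" using k real e by (intro ennreal_plus) auto
    also have "ennreal (k * r) = ennreal k * a" using k real by (simp add: ennreal_mult)
    finally show "b \<le> ennreal k * a + ennreal e" .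
  qed
next
  case top
  then show ?thesis using k by (simp add: ennreal_mult_top)
qed

lemma singleton_pre:
  assumes "\<beta> > 0"
  shows "packing_pre (\<lambda>_. True) \<beta> {x} = 0"
proof -
  have "packing_pre (\<lambda>_. True) \<beta> {x} \<le> 0 + ennreal e" if e: "e > 0" for e
  proof -
    define \<epsilon> where "\<epsilon> = e powr (1/\<beta>)"
    have \<epsilon>0: "\<epsilon> > 0" using e by (simp add: \<epsilon>_def)
    have "packing_pre (\<lambda>_. True) \<beta> {x} \<le> packing_pre_eps (\<lambda>_. True) \<beta> \<epsilon> {x}"
      unfolding packing_pre_def using \<epsilon>0 by (intro INF_lower) auto
    also have "\<dots> \<le> ennreal e"
      unfolding packing_pre_eps_def
    proof (rule SUP_least)
      fix P assume "P \<in> {P. packing (\<lambda>_. True) \<epsilon> {x} P}"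
      then have P: "packing (\<lambda>_. True) \<epsilon> {x} P" by simp
      have mem: "fst z < x \<and> x < snd z \<and> snd z - fst z \<le> \<epsilon>" if "z \<in> P" for z
      proof -
        have "case z of (a,b) \<Rightarrow> a < b \<and> True \<and> b - a \<le> \<epsilon> \<and> {a<..<b} \<inter> {x} \<noteq> {}"
          using bspec[OF conjunct1[OF conjunct2[OF P[unfolded packing_def]]] that] .
        then show ?thesis by (cases z) auto
      qed
      have one: "z = z'" if "z \<in> P" "z' \<in> P" for z z'
      proof (rule ccontr)
        assume "z \<noteq> z'"
        then have "{fst z<..<snd z} \<inter> {fst z'<..<snd z'} = {}"
          using conjunct2[OF conjunct2[OF P[unfolded packing_def]]] that by blast
        moreover have "x \<in> {fst z<..<snd z} \<inter> {fst z'<..<snd z'}" using mem[OF that(1)] mem[OF that(2)] by auto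
        ultimately show False by blast
      qed
      show "infsum (\<lambda>(a,b). ennreal ((b - a) powr \<beta>)) P \<le> ennreal e"
      proof (cases "P = {}")
        case True then show ?thesis by simp
      next
        case False
        then obtain z where z: "z \<in> P" by auto
        have Pz: "P = {z}"
        proof
          show "P \<subseteq> {z}" using one z by blast
          show "{z} \<subseteq> P" using z by blast
        qed
        have "(snd z - fst z) powr \<beta> \<le> \<epsilon> powr \<beta>"
          using mem[OF z] assms by (intro powr_mono2) auto
        also have "\<epsilon> powr \<beta> = e" unfolding \<epsilon>_def using e assms by (simp add: powr_powr)
        finally have "(snd z - fst z) powr \<beta> \<le> e" .
        then have "ennreal ((snd z - fst z) powr \<beta>) \<le> ennreal e" by (rule ennreal_leI)
        then show ?thesis unfolding Pz by (simp add: case_prod_unfold)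
      qed
    qed
    finally show ?thesis by simp
  qed
  then have "packing_pre (\<lambda>_. True) \<beta> {x} \<le> 0" by (rule ennreal_le_epsilon)
  then show ?thesis by simp
qed

context qs
begin

lemma Kc_pos: assumes "0 \<le> \<alpha>" "\<alpha> < \<beta>" shows "Kc \<alpha> \<beta> > 0"
proof -
  have "2 powr (\<alpha> - \<beta>) < (1::real)" using assms by (intro powr_less_one) auto
  then show ?thesis unfolding Kc_def using dpos by simp
qed

abbreviation "fam \<equiv> (\<lambda>I. I \<in> Qstar_cyl_family s q)"

lemma core_pre_eps:
  assumes F: "F \<subseteq> {0..1}" "F \<inter> D = {}" and eps: "0 < \<epsilon>" "\<epsilon> \<le> 1" and ab: "0 \<le> \<alpha>" "\<alpha> < \<beta>"
  shows "packing_pre_eps (\<lambda>_. True) \<beta> \<epsilon> F \<le> ennreal (Kc \<alpha> \<beta>) * packing_pre_eps fam \<alpha> \<epsilon> F"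
proof (cases "packing_pre_eps fam \<alpha> \<epsilon> F = top")
  case True
  have "ennreal (Kc \<alpha> \<beta>) \<noteq> 0" using Kc_pos[OF ab] by simp
  then show ?thesis using True by (simp add: ennreal_mult_top)
next
  case False
  then obtain S where T: "packing_pre_eps fam \<alpha> \<epsilon> F = ennreal S" and S0: "0 \<le> S"
    by (cases "packing_pre_eps fam \<alpha> \<epsilon> F") auto
  have SQ: "(\<Sum>p\<in>Q. (snd p - fst p) powr \<alpha>) \<le> S" if Q: "finite Q" "packing fam \<epsilon> F Q" for Q
  proof -
    have "ennreal (\<Sum>p\<in>Q. (snd p - fst p) powr \<alpha>) = (\<Sum>p\<in>Q. ennreal ((snd p - fst p) powr \<alpha>))"
      by (rule sum_ennreal[symmetric]) simp
    also have "\<dots> = infsum (\<lambda>(a,b). ennreal ((b - a) powr \<alpha>)) Q"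
      using Q(1) by (simp add: case_prod_unfold)
    also have "\<dots> \<le> packing_pre_eps fam \<alpha> \<epsilon> F"
      unfolding packing_pre_eps_def using Q(2) by (intro SUP_upper) simp
    finally show ?thesis using T S0 by simp
  qed
  show ?thesis
    unfolding packing_pre_eps_def[of "\<lambda>_. True"]
  proof (rule SUP_least)
    fix P assume "P \<in> {P. packing (\<lambda>_. True) \<epsilon> F P}"
    then have P: "packing (\<lambda>_. True) \<epsilon> F P" by simp
    show "infsum (\<lambda>(a,b). ennreal ((b - a) powr \<beta>)) P \<le> ennreal (Kc \<alpha> \<beta>) * packing_pre_eps fam \<alpha> \<epsilon> F"
      unfolding infsum_finite_sup
    proof (rule SUP_least)
      fix G assume "G \<in> {G. finite G \<and> G \<subseteq> P}"
      then have G: "finite G" "G \<subseteq> P" by auto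
      have PG: "packing (\<lambda>_. True) \<epsilon> F G" using packing_gen_mono[OF P _ order_refl subset_refl G(2)] by simp
      have "(\<Sum>p\<in>G. (snd p - fst p) powr \<beta>) \<le> Kc \<alpha> \<beta> * S"
        using core_finite[OF F eps ab G(1) PG SQ] by blast
      then have "ennreal (\<Sum>p\<in>G. (snd p - fst p) powr \<beta>) \<le> ennreal (Kc \<alpha> \<beta> * S)"
        by (rule ennreal_leI)
      also have "\<dots> = ennreal (Kc \<alpha> \<beta>) * packing_pre_eps fam \<alpha> \<epsilon> F"
        using T S0 Kc_pos[OF ab] by (simp add: ennreal_mult)
      finally show "ennreal (\<Sum>p\<in>G. (snd p - fst p) powr \<beta>) \<le> ennreal (Kc \<alpha> \<beta>) * packing_pre_eps fam \<alpha> \<epsilon> F" .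
    qed
  qed
qed

lemma core_pre:
  assumes F: "F \<subseteq> {0..1}" "F \<inter> D = {}" and ab: "0 \<le> \<alpha>" "\<alpha> < \<beta>"
  shows "packing_pre (\<lambda>_. True) \<beta> F \<le> ennreal (Kc \<alpha> \<beta>) * packing_pre fam \<alpha> F"
proof (rule ennreal_le_Ka[OF Kc_pos[OF ab]])
  fix y assume "packing_pre fam \<alpha> F < y"
  then obtain e where e: "e \<in> {0::real<..}" "packing_pre_eps fam \<alpha> e F < y"
    unfolding packing_pre_def by (auto simp: INF_less_iff)
  define e' where "e' = min e 1"
  have e': "0 < e'" "e' \<le> 1" "e' \<le> e" using e(1) by (auto simp: e'_def)
  have "packing_pre (\<lambda>_. True) \<beta> F \<le> packing_pre_eps (\<lambda>_. True) \<beta> e' F"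
    unfolding packing_pre_def using e' by (intro INF_lower) auto
  also have "\<dots> \<le> ennreal (Kc \<alpha> \<beta>) * packing_pre_eps fam \<alpha> e' F"
    by (rule core_pre_eps[OF F e'(1,2) ab])
  also have "\<dots> \<le> ennreal (Kc \<alpha> \<beta>) * packing_pre_eps fam \<alpha> e F"
    by (intro mult_left_mono pre_eps_gen_mono e'(3)) auto
  also have "\<dots> \<le> ennreal (Kc \<alpha> \<beta>) * y"
    using e(2) by (intro mult_left_mono) auto
  finally show "packing_pre (\<lambda>_. True) \<beta> F \<le> ennreal (Kc \<alpha> \<beta>) * y" .
qed

lemma measure_zero:
  assumes E: "E \<subseteq> {0..1}" and ab: "0 \<le> \<alpha>" "\<alpha> < \<beta>" and Z: "packing_measure fam \<alpha> E = 0"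
  shows "packing_measure (\<lambda>_. True) \<beta> E = 0"
proof -
  define K where "K = ennreal (Kc \<alpha> \<beta>)"
  have "packing_measure (\<lambda>_. True) \<beta> E \<le> ennreal (Kc \<alpha> \<beta>) * packing_measure fam \<alpha> E"
  proof (rule ennreal_le_Ka[OF Kc_pos[OF ab]])
    fix y assume "packing_measure fam \<alpha> E < y"
    then obtain C where C: "E \<subseteq> (\<Union>j. C j)" "(\<Sum>j. packing_pre fam \<alpha> (C j)) < y"
      unfolding packing_measure_def by (auto simp: INF_less_iff)
    define d where "d = from_nat_into D"
    define C' where "C' n = (if even n then C (n div 2) \<inter> {0..1} - D else {d (n div 2)})" for n
    have cov: "E \<subseteq> (\<Union>n. C' n)"
    proof
      fix x assume x: "x \<in> E"
      show "x \<in> (\<Union>n. C' n)"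
      proof (cases "x \<in> D")
        case True
        then have "d (to_nat_on D x) = x" unfolding d_def by (simp add: countable_D)
        then have "x \<in> C' (2 * to_nat_on D x + 1)" by (simp add: C'_def)
        then show ?thesis by blast
      next
        case False
        obtain j where "x \<in> C j" using x C(1) by auto
        then have "x \<in> C' (2 * j)" using False x E by (auto simp: C'_def)
        then show ?thesis by blast
      qed
    qed
    define f where "f n = packing_pre (\<lambda>_. True) \<beta> (C' n)" for n
    have b0: "\<beta> > 0" using ab by simp
    have "(\<lambda>n. f (2 * n)) sums (\<Sum>n. f n) \<longleftrightarrow> f sums (\<Sum>n. f n)"
    proof (rule sums_mono_reindex)
      show "strict_mono (\<lambda>n::nat. 2 * n)" by (auto simp: strict_mono_def)
      fix n assume "n \<notin> range (\<lambda>n::nat. 2 * n)"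
      then have "odd n" by (metis evenE rangeI)
      then show "f n = 0" unfolding f_def C'_def using singleton_pre[OF b0] by simp
    qed
    then have "(\<lambda>n. f (2 * n)) sums (\<Sum>n. f n)" using summable_sums[OF summableI] by blast
    then have eq: "(\<Sum>n. f n) = (\<Sum>n. f (2 * n))" by (simp add: sums_iff)
    have "packing_measure (\<lambda>_. True) \<beta> E \<le> (\<Sum>n. f n)"
      unfolding packing_measure_def f_def using cov by (intro INF_lower) simp
    also have "\<dots> = (\<Sum>j. packing_pre (\<lambda>_. True) \<beta> (C j \<inter> {0..1} - D))"
      unfolding eq by (simp add: f_def C'_def)
    also have "\<dots> \<le> (\<Sum>j. ennreal (Kc \<alpha> \<beta>) * packing_pre fam \<alpha> (C j))"
    proof (intro suminf_le summableI)
      fix j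
      have "packing_pre (\<lambda>_. True) \<beta> (C j \<inter> {0..1} - D) \<le> ennreal (Kc \<alpha> \<beta>) * packing_pre fam \<alpha> (C j \<inter> {0..1} - D)"
        by (rule core_pre) (use ab in auto)
      also have "\<dots> \<le> ennreal (Kc \<alpha> \<beta>) * packing_pre fam \<alpha> (C j)"
        by (intro mult_left_mono pre_gen_mono) auto
      finally show "packing_pre (\<lambda>_. True) \<beta> (C j \<inter> {0..1} - D) \<le> ennreal (Kc \<alpha> \<beta>) * packing_pre fam \<alpha> (C j)" .
    qed
    also have "\<dots> = ennreal (Kc \<alpha> \<beta>) * (\<Sum>j. packing_pre fam \<alpha> (C j))" by (rule ennreal_suminf_cmult)
    also have "\<dots> \<le> ennreal (Kc \<alpha> \<beta>) * y" using C(2) by (intro mult_left_mono) auto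
    finally show "packing_measure (\<lambda>_. True) \<beta> E \<le> ennreal (Kc \<alpha> \<beta>) * y" .
  qed
  then show ?thesis using Z by simp
qed

lemma dims_equal:
  assumes E: "E \<subseteq> {0..1}"
  shows "packing_dim fam E = packing_dim (\<lambda>_. True) E"
proof -
  define Sf where "Sf = {ereal \<alpha> | \<alpha>. \<alpha> \<ge> 0 \<and> packing_measure fam \<alpha> E = 0}"
  define Su where "Su = {ereal \<alpha> | \<alpha>. \<alpha> \<ge> 0 \<and> packing_measure (\<lambda>_. True) \<alpha> E = 0}"
  have sub: "Su \<subseteq> Sf"
  proof
    fix x assume "x \<in> Su"
    then obtain \<alpha> where a: "x = ereal \<alpha>" "\<alpha> \<ge> 0" "packing_measure (\<lambda>_. True) \<alpha> E = 0"
      unfolding Su_def by blast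
    have "packing_measure fam \<alpha> E \<le> packing_measure (\<lambda>_. True) \<alpha> E"
      by (rule measure_adm_mono) simp
    then show "x \<in> Sf" using a unfolding Sf_def by auto
  qed
  have "Inf Su \<le> Inf Sf"
  proof (rule Inf_greatest)
    fix x assume "x \<in> Sf"
    then obtain \<alpha> where a: "x = ereal \<alpha>" "\<alpha> \<ge> 0" "packing_measure fam \<alpha> E = 0"
      unfolding Sf_def by blast
    show "Inf Su \<le> x"
    proof (rule dense_ge)
      fix y assume y: "x < y"
      show "Inf Su \<le> y"
      proof (cases y)
        case (real r)
        then have "\<alpha> < r" using y a by simp
        then have "ereal r \<in> Su" using measure_zero[OF E a(2) _ a(3)] a(2) unfolding Su_def by auto
        then show ?thesis using real by (simp add: Inf_lower)
      next
        case PInf then show ?thesis by simp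
      next
        case MInf then show ?thesis using y by simp
      qed
    qed
  qed
  moreover have "Inf Sf \<le> Inf Su" using sub by (rule Inf_superset_mono)
  ultimately show ?thesis unfolding packing_dim_def Sf_def Su_def by simp
qed

end

theorem corollary2:
  fixes s :: nat and q :: "nat \<Rightarrow> nat \<Rightarrow> real"
  assumes "s \<ge> 2"
    and "Qstar_matrix s q"
    and "\<exists>\<delta>>0. \<forall>i<s. \<forall>k. q i k \<ge> \<delta>"
  shows "\<forall>E. E \<subseteq> {0..1} \<longrightarrow>
           packing_dim_fam E (Qstar_cyl_family s q) = packing_dim_unc E"
proof -
  obtain \<delta> where d: "\<delta> > 0" "\<forall>i<s. \<forall>k. q i k \<ge> \<delta>" using assms(3) by blast
  interpret qs s q \<delta> using assms(1,2) d by unfold_locales auto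
  show ?thesis unfolding packing_dim_fam_def packing_dim_unc_def using dims_equal by blast
qed

end
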